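(* Let $T$ be the set of $(a_0,\dots,a_9)\in\mathbb{R}^{10}$ such that $P(x,a)=x^{11}-x^{10}+a_9x^9+\cdots+a_0$ satisfies $a_9,a_8,a_7,a_6<0$, $a_5,\dots,a_1>0$, $a_0<0$ and has exactly one positive and exactly eight negative roots, all simple. Suppose $T\ne\emptyset$, let $\Gamma$ be a connected component of $T$, $\bar\Gamma$ its closure, and let $H$ be the set of polynomials $P(x,a)$, $a\in\bar\Gamma$, all of whose roots are real. Then no polynomial in $H$ has exactly two distinct real roots. *)

theory Defs
  imports "HOL-Analysis.Analysis" "HOL-Computational_Algebra.Polynomial"
begin

text \<open>Points of R^10 are vectors a :: real^10; the coordinate a_j (j = 0..9) is
  a $ (of_nat j), the index type 10 being the integers modulo 10.\<close>

definition coef10 :: "real^10 \<Rightarrow> nat \<Rightarrow> real" where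
  "coef10 a j = a $ (of_nat j :: 10)"

definition Ppoly :: "real^10 \<Rightarrow> real poly" where
  "Ppoly a = monom 1 11 - monom 1 10 + (\<Sum>j<10. monom (coef10 a j) j)"

definition Tset :: "(real^10) set" where
  "Tset = {a. (\<forall>j\<in>{6..9}. coef10 a j < 0) \<and> (\<forall>j\<in>{1..5}. coef10 a j > 0) \<and> coef10 a 0 < 0
          \<and> card {x::real. x > 0 \<and> poly (Ppoly a) x = 0} = 1
          \<and> card {x::real. x < 0 \<and> poly (Ppoly a) x = 0} = 8
          \<and> (\<forall>x::real. poly (Ppoly a) x = 0 \<longrightarrow> order x (Ppoly a) = 1)}"

definition all_roots_real :: "real poly \<Rightarrow> bool" where
  "all_roots_real p \<longleftrightarrow> (\<forall>z::complex. poly (map_poly complex_of_real p) z = 0 \<longrightarrow> z \<in> \<real>)"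

end

theory Submission
  imports Defs "HOL-Computational_Algebra.Fundamental_Theorem_Algebra"
begin


lemma coeff_lin_mult: "coeff ([:c, 1:] * p) k = c * coeff p k + (if k = 0 then 0 else coeff p (k - 1))"
  for c :: real
proof -
  have "[:c, 1:] * p = smult c p + pCons 0 p" by (simp add: mult_pCons_left smult_one)
  then show ?thesis by (cases k) simp_all
qed

definition SP :: "real set \<Rightarrow> real poly" where
  "SP A = (\<Prod>x\<in>A. [:-x, 1:])"

definition inv_S :: "nat \<Rightarrow> real \<Rightarrow> (nat \<Rightarrow> real) \<Rightarrow> bool" where
  "inv_S n d s \<longleftrightarrow> s n = 1 \<and> (\<forall>k>n. s k = 0) \<and> (\<forall>k\<le>n. s k > 0)
     \<and> (real n - 1) * (s 1)^2 \<ge> 2 * real n * s 0 * s 2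
     \<and> (n \<le> 8 \<longrightarrow> s 1 * s 2 \<ge> (10/3) * s 0 * s 3)
     \<and> (n \<le> 9 \<longrightarrow> s 1 * s 3 \<ge> (13/3) * s 0 * s 4)
     \<and> (\<forall>k<n. s k \<le> real n * d * s (Suc k))"

lemma N1_step:
  fixes a b c r n :: real
  assumes "n > 0" "r > 0" "(n - 1) * b^2 \<ge> 2 * n * a * c"
  shows "n * (r * b + a)^2 \<ge> 2 * (n + 1) * (r * a) * (r * c + b)"
proof -
  have id: "n * (n * (r * b + a)^2 - 2 * (n + 1) * (r * a) * (r * c + b))
     = (n * a - r * b)^2 + (n + 1) * r^2 * ((n - 1) * b^2 - 2 * n * a * c)"
    by (simp add: algebra_simps power2_eq_square)
  have "0 \<le> (n + 1) * r^2 * ((n - 1) * b^2 - 2 * n * a * c)"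
    using assms by (intro mult_nonneg_nonneg) auto
  then have "0 \<le> n * (n * (r * b + a)^2 - 2 * (n + 1) * (r * a) * (r * c + b))"
    unfolding id by (simp add: add_nonneg_nonneg)
  then show ?thesis using assms(1) by (simp add: zero_le_mult_iff)
qed

lemma E_step:
  fixes a b c e r :: real
  assumes "r > 0" "a \<ge> 0" "b \<ge> 0" "b * c \<ge> (10/3) * a * e" "b^2 \<ge> (7/3) * a * c"
  shows "(r * b + a) * (r * c + b) \<ge> (10/3) * (r * a) * (r * e + c)"
proof -
  have id: "(r * b + a) * (r * c + b) - (10/3) * (r * a) * (r * e + c)
      = a * b + r * (b^2 - (7/3) * a * c) + r^2 * (b * c - (10/3) * a * e)"
    by (simp add: algebra_simps power2_eq_square)
  have "0 \<le> a * b + r * (b^2 - (7/3) * a * c) + r^2 * (b * c - (10/3) * a * e)"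
    using assms by (intro add_nonneg_nonneg mult_nonneg_nonneg) auto
  then show ?thesis using id by linarith
qed

lemma D_step:
  fixes a b c e f r :: real
  assumes "r > 0" "a \<ge> 0" "c \<ge> 0" "b * e \<ge> (13/3) * a * f" "b * c \<ge> (10/3) * a * e"
  shows "(r * b + a) * (r * e + c) \<ge> (13/3) * (r * a) * (r * f + e)"
proof -
  have id: "(r * b + a) * (r * e + c) - (13/3) * (r * a) * (r * f + e)
      = a * c + r * (b * c - (10/3) * a * e) + r^2 * (b * e - (13/3) * a * f)"
    by (simp add: algebra_simps power2_eq_square)
  have "0 \<le> a * c + r * (b * c - (10/3) * a * e) + r^2 * (b * e - (13/3) * a * f)"
    using assms by (intro add_nonneg_nonneg mult_nonneg_nonneg) auto
  then show ?thesis using id by linarith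
qed

lemma N1_weak:
  fixes s0 s1 s2 :: real
  assumes "n \<le> 7" "s0 \<ge> 0" "s2 \<ge> 0" "(real n - 1) * s1^2 \<ge> 2 * real n * s0 * s2" "n = 0 \<longrightarrow> s2 = 0"
  shows "s1^2 \<ge> (7/3) * s0 * s2"
proof (cases "n \<ge> 2")
  case True
  have a: "0 \<le> s0 * s2" using assms by simp
  have "7 * (real n - 1) * (s0 * s2) \<le> 6 * real n * (s0 * s2)"
    using a assms(1) by (intro mult_right_mono) auto
  also have "\<dots> \<le> 3 * ((real n - 1) * s1^2)" using assms(4) by (simp add: algebra_simps)
  finally have "(real n - 1) * (7 * (s0 * s2)) \<le> (real n - 1) * (3 * s1^2)" by (simp add: algebra_simps)
  then have "7 * (s0 * s2) \<le> 3 * s1^2" using True by (subst (asm) mult_le_cancel_left_pos) auto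
  then show ?thesis by simp
next
  case False
  then have "n = 0 \<or> n = 1" by auto
  moreover have "s0 * s2 \<ge> 0" using assms by simp
  moreover have "n = 1 \<Longrightarrow> s0 * s2 \<le> 0" using assms by simp
  ultimately have "s0 * s2 = 0" using assms by (metis antisym mult_zero_right)
  then have "(7/3) * s0 * s2 = 0" by (simp add: mult.assoc)
  then show ?thesis using zero_le_power2[of s1] by linarith
qed

lemma inv_S_step:
  assumes "inv_S n d s" "r > 0" "r \<le> d"
  shows "inv_S (Suc n) d (\<lambda>k. r * s k + (if k = 0 then 0 else s (k - 1)))"
proof -
  let ?t = "\<lambda>k. r * s k + (if k = 0 then 0 else s (k - 1))"
  note I = assms(1)[unfolded inv_S_def]
  have pos: "\<And>k. k \<le> n \<Longrightarrow> s k > 0" using I by auto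
  have z: "\<And>k. k > n \<Longrightarrow> s k = 0" using I by auto
  have nn: "\<And>k. s k \<ge> 0" using pos z by (metis less_imp_le not_le order_refl)
  have d0: "d > 0" using assms by simp
  have c1: "?t (Suc n) = 1" using I by simp
  have c2: "\<forall>k>Suc n. ?t k = 0" using z by auto
  have c3: "\<forall>k\<le>Suc n. ?t k > 0"
  proof (intro allI impI)
    fix k assume k: "k \<le> Suc n"
    show "?t k > 0"
    proof (cases k)
      case 0 then show ?thesis using pos[of 0] assms(2) by simp
    next
      case (Suc j) then show ?thesis using pos[of j] k nn[of k] assms(2)
        by (simp add: add_nonneg_pos)
    qed
  qed
  have c4: "(real (Suc n) - 1) * (?t 1)^2 \<ge> 2 * real (Suc n) * ?t 0 * ?t 2"
  proof (cases "n = 0")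
    case True then show ?thesis using z by simp
  next
    case False
    have "real n * (r * s 1 + s 0)^2 \<ge> 2 * (real n + 1) * (r * s 0) * (r * s 2 + s 1)"
      using N1_step[where a="s 0" and b="s 1" and c="s 2" and r=r and n="real n"] False assms(2) I by auto
    then show ?thesis by (simp add: algebra_simps)
  qed
  have c5: "Suc n \<le> 8 \<longrightarrow> ?t 1 * ?t 2 \<ge> (10/3) * ?t 0 * ?t 3"
  proof
    assume "Suc n \<le> 8"
    have w: "(s 1)^2 \<ge> (7/3) * s 0 * s 2"
      using N1_weak[of n "s 0" "s 2" "s 1"] \<open>Suc n \<le> 8\<close> nn I z by auto
    show "?t 1 * ?t 2 \<ge> (10/3) * ?t 0 * ?t 3"
      using E_step[where r=r and a="s 0" and b="s 1" and c="s 2" and e="s 3"] w nn assms(2) I \<open>Suc n \<le> 8\<close> by simp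
  qed
  have c6: "Suc n \<le> 9 \<longrightarrow> ?t 1 * ?t 3 \<ge> (13/3) * ?t 0 * ?t 4"
  proof
    assume "Suc n \<le> 9"
    show "?t 1 * ?t 3 \<ge> (13/3) * ?t 0 * ?t 4"
      using D_step[where r=r and a="s 0" and b="s 1" and c="s 2" and e="s 3" and f="s 4"] nn assms(2) I \<open>Suc n \<le> 9\<close>
      by (simp add: numeral_eq_Suc)
  qed
  have c7: "\<forall>k<Suc n. ?t k \<le> real (Suc n) * d * ?t (Suc k)"
  proof (intro allI impI)
    fix k assume k: "k < Suc n"
    have "?t k \<le> real (Suc n) * d * s k"
    proof (cases k)
      case 0
      have "r * s 0 \<le> d * s 0" using assms nn[of 0] by (intro mult_right_mono) auto
      also have "\<dots> \<le> real (Suc n) * d * s 0" using d0 nn[of 0]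
        by (intro mult_right_mono) auto
      finally show ?thesis using 0 by simp
    next
      case (Suc j)
      have "s j \<le> real n * d * s k" using I k Suc by auto
      moreover have "r * s k \<le> d * s k" using assms nn[of k] by (intro mult_right_mono) auto
      ultimately show ?thesis using Suc by (simp add: algebra_simps)
    qed
    also have "\<dots> \<le> real (Suc n) * d * ?t (Suc k)"
      using d0 nn[of k] nn[of "Suc k"] assms(2)
      by (intro mult_left_mono) (auto simp: mult_nonneg_nonneg)
    finally show "?t k \<le> real (Suc n) * d * ?t (Suc k)" .
  qed
  show ?thesis unfolding inv_S_def using c1 c2 c3 c4 c5 c6 c7 by blast
qed

lemma inv_SP:
  assumes "finite A" "A \<subseteq> {x. -d \<le> x \<and> x < 0}"
  shows "inv_S (card A) d (coeff (SP A))"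
  using assms
proof (induction A rule: finite_induct)
  case empty
  show ?case unfolding inv_S_def SP_def by (simp add: coeff_1)
next
  case (insert x A)
  have e: "SP (insert x A) = [:-x, 1:] * SP A" unfolding SP_def using insert by simp
  have "coeff (SP (insert x A)) = (\<lambda>k. (-x) * coeff (SP A) k + (if k = 0 then 0 else coeff (SP A) (k - 1)))"
    unfolding e by (rule ext) (rule coeff_lin_mult)
  moreover have "inv_S (card A) d (coeff (SP A))" using insert by auto
  ultimately show ?case using inv_S_step[of "card A" d "coeff (SP A)" "-x"] insert by auto
qed



lemma coeff_Ppoly: "coeff (Ppoly a) k = (if k = 11 then 1 else if k = 10 then -1 else if k < 10 then coef10 a k else 0)"
  unfolding Ppoly_def by (simp add: coeff_monom coeff_sum)

lemma poly_Ppoly: "poly (Ppoly a) x = x^11 - x^10 + (\<Sum>j<10. coef10 a j * x^j)"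
  unfolding Ppoly_def by (simp add: poly_monom poly_sum)

lemma degree_Ppoly: "degree (Ppoly a) = 11"
proof (rule antisym)
  show "degree (Ppoly a) \<le> 11" by (rule degree_le) (simp add: coeff_Ppoly)
  show "11 \<le> degree (Ppoly a)" by (rule le_degree) (simp add: coeff_Ppoly)
qed

lemma Ppoly_nz: "Ppoly a \<noteq> 0" using degree_Ppoly by (metis degree_0 zero_neq_numeral)

lemma lead_Ppoly: "lead_coeff (Ppoly a) = 1" by (simp add: degree_Ppoly coeff_Ppoly)

lemma SP_monic: "finite A \<Longrightarrow> coeff (SP A) (card A) = 1 \<and> (\<forall>k>card A. coeff (SP A) k = 0)"
proof (induction A rule: finite_induct)
  case empty then show ?case by (simp add: SP_def coeff_1)
next
  case (insert x A)
  have e: "SP (insert x A) = [:-x, 1:] * SP A" unfolding SP_def using insert by simp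
  show ?case unfolding e coeff_lin_mult using insert by auto
qed

lemma SP_degree: assumes "finite A" shows "degree (SP A) = card A"
proof (rule antisym)
  show "degree (SP A) \<le> card A" by (rule degree_le) (use SP_monic[OF assms] in auto)
  show "card A \<le> degree (SP A)" by (rule le_degree) (use SP_monic[OF assms] in auto)
qed

lemma SP_nz: "finite A \<Longrightarrow> SP A \<noteq> 0"
  using SP_monic[of A] by auto

lemma poly_SP: "poly (SP A) x = (\<Prod>y\<in>A. x - y)"
  unfolding SP_def by (simp add: poly_prod)

lemma SP_dvd: "finite A \<Longrightarrow> (\<forall>x\<in>A. poly p x = 0) \<Longrightarrow> SP A dvd p"
proof (induction A arbitrary: p rule: finite_induct)
  case empty then show ?case by (simp add: SP_def)
next
  case (insert x A)
  then have "SP A dvd p" by auto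
  then obtain h where h: "p = SP A * h" by (auto elim: dvdE)
  have "poly (SP A) x \<noteq> 0" using insert by (simp add: poly_SP)
  moreover have "poly p x = 0" using insert by auto
  ultimately have "poly h x = 0" using h by simp
  then obtain g where g: "h = [:-x, 1:] * g" by (auto simp: poly_eq_0_iff_dvd elim: dvdE)
  have e: "SP (insert x A) = [:-x, 1:] * SP A" unfolding SP_def using insert by simp
  have "p = SP (insert x A) * g" unfolding e h g by (simp only: mult_ac)
  then show ?case by (rule dvdI)
qed

lemma T_factor:
  assumes "a \<in> Tset"
  obtains \<rho> N p q where "\<rho> > 0" "poly (Ppoly a) \<rho> = 0" "finite N" "card N = 8"
    "\<forall>x\<in>N. x < 0 \<and> poly (Ppoly a) x = 0" "p^2 < 4 * q"
    "Ppoly a = [:-\<rho>, 1:] * [:q, p, 1:] * SP N"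
proof -
  let ?P = "Ppoly a"
  note T = assms[unfolded Tset_def, simplified]
  define R where "R = {x. poly ?P x = 0}"
  have finR: "finite R" unfolding R_def using Ppoly_nz poly_roots_finite by blast
  have c1: "card {x. x > 0 \<and> poly ?P x = 0} = 1" using T by simp
  obtain \<rho> where rho: "{x. x > 0 \<and> poly ?P x = 0} = {\<rho>}" using card_1_singletonE[OF c1] by blast
  define N where "N = {x. x < 0 \<and> poly ?P x = 0}"
  have cN: "card N = 8" using T N_def by simp
  have finN: "finite N" using cN by (intro card_ge_0_finite) simp
  have r0: "\<rho> > 0" "poly ?P \<rho> = 0" using rho by auto
  have p0: "poly ?P 0 \<noteq> 0" using T by (simp add: poly_Ppoly)
  have RN: "R = insert \<rho> N"
  proof
    show "R \<subseteq> insert \<rho> N"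
    proof
      fix x assume "x \<in> R"
      then have x: "poly ?P x = 0" unfolding R_def by simp
      then have "x \<noteq> 0" using p0 by auto
      then show "x \<in> insert \<rho> N"
        using x rho unfolding N_def by (cases "x > 0") auto
    qed
    show "insert \<rho> N \<subseteq> R" using r0 unfolding R_def N_def by auto
  qed
  have rN: "\<rho> \<notin> N" using r0 unfolding N_def by auto
  have "SP R dvd ?P" using SP_dvd[OF finR] unfolding R_def by auto
  then obtain Q where PQ: "?P = SP R * Q" by (auto elim: dvdE)
  have SPR: "SP R = [:-\<rho>, 1:] * SP N" unfolding SP_def RN using finN rN by simp
  have cR: "card R = 9" unfolding RN using finN rN cN by simp
  have Qnz: "Q \<noteq> 0" using PQ Ppoly_nz by auto
  have "11 = degree (SP R * Q)" using degree_Ppoly[of a] PQ by simp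
  then have dQ: "degree Q = 2"
    using degree_mult_eq[OF SP_nz[OF finR] Qnz] SP_degree[OF finR] cR by simp
  have lQ: "lead_coeff Q = 1"
  proof -
    have "lead_coeff ?P = lead_coeff (SP R) * lead_coeff Q" using PQ lead_coeff_mult by metis
    moreover have "lead_coeff (SP R) = 1" using SP_monic[OF finR] SP_degree[OF finR] by simp
    ultimately show ?thesis using lead_Ppoly by simp
  qed
  define p where "p = coeff Q 1"
  define q where "q = coeff Q 0"
  have Qe: "Q = [:q, p, 1:]"
  proof (rule poly_eqI)
    fix n
    show "coeff Q n = coeff [:q, p, 1:] n"
    proof (cases "n \<le> 2")
      case True
      then have "n = 0 \<or> n = 1 \<or> n = 2" by auto
      then show ?thesis using lQ dQ p_def q_def by (auto simp: numeral_2_eq_2)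
    next
      case False
      then show ?thesis using dQ by (simp add: coeff_eq_0 coeff_pCons split: nat.split)
    qed
  qed
  have disc: "p^2 < 4 * q"
  proof (rule ccontr)
    assume "\<not> p^2 < 4 * q"
    then have ge: "p^2 - 4 * q \<ge> 0" by simp
    define y where "y = (- p + sqrt (p^2 - 4 * q)) / 2"
    have "(sqrt (p^2 - 4 * q))^2 = p^2 - 4 * q" using ge by simp
    then have "y^2 + p * y + q = 0" unfolding y_def by (simp add: power2_eq_square field_simps)
    then have Qy: "poly Q y = 0" unfolding Qe by (simp add: algebra_simps power2_eq_square)
    then have Py: "poly ?P y = 0" using PQ by simp
    then have "order y ?P = 1" using T by simp
    moreover have "order y ?P = order y (SP R) + order y Q"
      using PQ Ppoly_nz order_mult by metis
    moreover have "order y (SP R) \<noteq> 0"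
    proof -
      have "y \<in> R" unfolding R_def using Py by simp
      then have "poly (SP R) y = 0" unfolding poly_SP using finR by (simp add: prod_zero_iff)
      then show ?thesis using order_root SP_nz[OF finR] by blast
    qed
    moreover have "order y Q \<noteq> 0" using Qy Qnz order_root by blast
    ultimately show False by simp
  qed
  have "?P = [:-\<rho>, 1:] * [:q, p, 1:] * SP N" unfolding PQ SPR Qe by (simp only: mult_ac)
  moreover have "\<forall>x\<in>N. x < 0 \<and> poly ?P x = 0" unfolding N_def by auto
  ultimately show ?thesis using that r0 finN cN disc by blast
qed



lemma coeff_cubic_mult3:
  fixes S :: "real poly"
  shows "coeff ([:c0, c1, c2, c3:] * S) (k + 3) = c0 * coeff S (k + 3) + c1 * coeff S (k + 2) + c2 * coeff S (k + 1) + c3 * coeff S k"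
  by (simp add: mult_pCons_left numeral_3_eq_3 numeral_2_eq_2)

lemma coeff_cubic_mult1:
  fixes S :: "real poly"
  shows "coeff ([:c0, c1, c2, c3:] * S) 1 = c0 * coeff S 1 + c1 * coeff S 0"
  by (simp add: mult_pCons_left)

lemma sum_bound:
  fixes x e :: real
  assumes "\<forall>j<10. \<bar>c j\<bar> \<le> e"
  shows "\<bar>\<Sum>j<10. c j * x^j\<bar> \<le> e * (\<Sum>j<10. \<bar>x\<bar>^j)"
proof -
  have "\<bar>\<Sum>j<10. c j * x^j\<bar> \<le> (\<Sum>j<10. \<bar>c j * x^j\<bar>)" by (rule sum_abs)
  also have "\<dots> \<le> (\<Sum>j<10. e * \<bar>x\<bar>^j)"
    using assms by (intro sum_mono) (auto simp: abs_mult power_abs intro: mult_right_mono)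
  finally show ?thesis by (simp add: sum_distrib_left)
qed

lemma root_bound:
  fixes x e :: real
  assumes c: "\<forall>j<10. \<bar>coef10 a j\<bar> \<le> e" and r: "poly (Ppoly a) x = 0" and e: "e \<le> 1/100"
  shows "x < 0 \<Longrightarrow> (-x)^10 \<le> 10 * e" and "x > 1 \<Longrightarrow> x - 1 \<le> 10 * e"
proof -
  have "\<bar>coef10 a 0\<bar> \<le> e" using c by simp
  then have e0: "e \<ge> 0" by linarith
  let ?S = "\<Sum>j<10. coef10 a j * x^j"
  have r': "x^11 - x^10 + ?S = 0" using r unfolding poly_Ppoly .
  have h11: "x^11 = x * x^10" by (simp add: numeral_eq_Suc)
  have "x^10 * (x - 1) = x^11 - x^10" unfolding h11 by (simp add: algebra_simps)
  then have "x^10 * (x - 1) = - ?S" using r' by linarith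
  then have eq: "\<bar>x^10 * (x - 1)\<bar> = \<bar>?S\<bar>" by simp
  have sb: "\<bar>x^10 * (x - 1)\<bar> \<le> e * (\<Sum>j<10. \<bar>x\<bar>^j)" using eq sum_bound[OF c] by simp
  have small: "\<bar>x\<bar> \<le> 1 \<Longrightarrow> (\<Sum>j<10. \<bar>x\<bar>^j) \<le> 10"
  proof -
    assume "\<bar>x\<bar> \<le> 1"
    then have "(\<Sum>j<10. \<bar>x\<bar>^j) \<le> (\<Sum>j<(10::nat). 1)"
      by (intro sum_mono) (simp add: power_le_one)
    then show ?thesis by simp
  qed
  have big: "\<bar>x\<bar> > 1 \<Longrightarrow> (\<Sum>j<10. \<bar>x\<bar>^j) \<le> 10 * \<bar>x\<bar>^9"
  proof -
    assume "\<bar>x\<bar> > 1"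
    then have "(\<Sum>j<10. \<bar>x\<bar>^j) \<le> (\<Sum>j<(10::nat). \<bar>x\<bar>^9)"
      by (intro sum_mono) (simp add: power_increasing)
    then show ?thesis by simp
  qed
  have sbig: "\<bar>x\<bar> > 1 \<Longrightarrow> \<bar>x^10 * (x - 1)\<bar> \<le> \<bar>x\<bar>^9 * (10 * e)"
  proof -
    assume h: "\<bar>x\<bar> > 1"
    have "e * (\<Sum>j<10. \<bar>x\<bar>^j) \<le> e * (10 * \<bar>x\<bar>^9)" using big[OF h] e0 by (rule mult_left_mono)
    then show ?thesis using sb by (simp add: mult_ac)
  qed
  show "(-x)^10 \<le> 10 * e" if "x < 0"
  proof (cases "\<bar>x\<bar> \<le> 1")
    case True
    have a1: "\<bar>x^10 * (x - 1)\<bar> = (-x)^10 * (1 - x)" using that by (simp add: abs_mult power_abs)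
    have a2: "(-x)^10 * 1 \<le> (-x)^10 * (1 - x)" using that by (intro mult_left_mono) auto
    have a3: "e * (\<Sum>j<10. \<bar>x\<bar>^j) \<le> e * 10" using small[OF True] e0 by (rule mult_left_mono)
    show ?thesis using a1 a2 a3 sb by simp
  next
    case False
    then have xg: "-x > 1" using that by simp
    have a1: "\<bar>x^10 * (x - 1)\<bar> = (-x)^9 * ((-x) * (1 - x))" using that by (simp add: abs_mult power_abs numeral_eq_Suc)
    have a2: "(-x) * (1 - x) \<ge> 1 * 1" using xg by (intro mult_mono) auto
    have "\<bar>x\<bar>^9 = (-x)^9" using that by (simp add: power_abs)
    then have "(-x)^9 * ((-x) * (1 - x)) \<le> (-x)^9 * (10 * e)" using a1 sbig False by simp
    then have "(-x) * (1 - x) \<le> 10 * e" using xg by (subst (asm) mult_le_cancel_left_pos) auto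
    then show ?thesis using a2 e by simp
  qed
  show "x - 1 \<le> 10 * e" if "x > 1"
  proof -
    have a1: "\<bar>x^10 * (x - 1)\<bar> = x^9 * (x * (x - 1))" using that by (simp add: abs_mult numeral_eq_Suc)
    have "x^9 * (x * (x - 1)) \<le> x^9 * (10 * e)" using a1 sbig that by simp
    then have "x * (x - 1) \<le> 10 * e" using that by (subst (asm) mult_le_cancel_left_pos) auto
    moreover have "x - 1 \<le> x * (x - 1)" using mult_right_mono[of 1 x "x - 1"] that by simp
    ultimately show ?thesis by simp
  qed
qed



lemma T_not_small:
  assumes aT: "a \<in> Tset" and sm: "\<forall>j<10. \<bar>coef10 a j\<bar> \<le> 1/10^61"
  shows False
proof -
  obtain \<rho> N p q where r0: "\<rho> > 0" and rr: "poly (Ppoly a) \<rho> = 0" and finN: "finite N"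
    and cN: "card N = 8" and Nr: "\<forall>x\<in>N. x < 0 \<and> poly (Ppoly a) x = 0" and disc: "p^2 < 4 * q"
    and Pe: "Ppoly a = [:-\<rho>, 1:] * [:q, p, 1:] * SP N"
    using T_factor[OF aT] by blast
  note T = aT[unfolded Tset_def, simplified]
  define e where "e = (1::real)/10^61"
  define \<delta> where "\<delta> = (1::real)/10^6"
  have e100: "e \<le> 1/100" unfolding e_def by simp
  have sm': "\<forall>j<10. \<bar>coef10 a j\<bar> \<le> e" using sm unfolding e_def .
  have d0: "\<delta> > 0" unfolding \<delta>_def by simp
  have ed: "10 * e = \<delta>^10" unfolding e_def \<delta>_def by (simp add: power_divide)
  have Nb: "N \<subseteq> {x. -\<delta> \<le> x \<and> x < 0}"
  proof
    fix x assume "x \<in> N"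
    then have x: "x < 0" "poly (Ppoly a) x = 0" using Nr by auto
    have "(-x)^Suc 9 \<le> \<delta>^Suc 9" using root_bound(1)[OF sm' x(2) e100 x(1)] ed by simp
    then have "-x \<le> \<delta>" using d0 by (intro power_le_imp_le_base[of "-x" 9 \<delta>]) auto
    then show "x \<in> {x. -\<delta> \<le> x \<and> x < 0}" using x by simp
  qed
  define s where "s = coeff (SP N)"
  have I: "inv_S 8 \<delta> s" using inv_SP[OF finN Nb] cN unfolding s_def by simp
  note I' = I[unfolded inv_S_def]
  have s8: "s 8 = 1" and s9: "s 9 = 0" and s10: "s 10 = 0" using I' by auto
  have spos: "\<And>k. k \<le> 8 \<Longrightarrow> s k > 0" using I' by auto
  have D: "s 1 * s 3 \<ge> (13/3) * s 0 * s 4" using I' by simp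
  have sk: "\<And>k. k < 8 \<Longrightarrow> s k \<le> 8 * \<delta> * s (Suc k)" using I' by simp
  have s7: "s 7 \<le> 8 * \<delta>" using sk[of 7] s8 by (simp add: numeral_eq_Suc)
  have s2: "s 2 \<le> 8 * \<delta> * s 3" using sk[of 2] by (simp add: numeral_eq_Suc)
  have rle: "\<rho> > 1 \<Longrightarrow> \<rho> - 1 \<le> 10 * e" using root_bound(2)[OF sm' rr e100] by simp
  have Fe: "[:-\<rho>, 1:] * [:q, p, 1:] = [:-\<rho> * q, q - \<rho> * p, p - \<rho>, 1:]"
    by (simp add: algebra_simps)
  have PF: "Ppoly a = [:-\<rho> * q, q - \<rho> * p, p - \<rho>, 1:] * SP N" using Pe unfolding Fe .
  have h10: "-1 = (p - \<rho>) + s 7"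
  proof -
    have "coeff (Ppoly a) (7 + 3) = -\<rho> * q * s 10 + (q - \<rho> * p) * s 9 + (p - \<rho>) * s 8 + 1 * s 7"
      unfolding PF coeff_cubic_mult3 s_def by simp
    then show ?thesis using s8 s9 s10 by (simp add: coeff_Ppoly)
  qed
  have h9: "coef10 a 9 = (q - \<rho> * p) + (p - \<rho>) * s 7 + s 6"
  proof -
    have "coeff (Ppoly a) (6 + 3) = -\<rho> * q * s 9 + (q - \<rho> * p) * s 8 + (p - \<rho>) * s 7 + 1 * s 6"
      unfolding PF coeff_cubic_mult3 s_def by simp
    then show ?thesis using s8 s9 by (simp add: coeff_Ppoly)
  qed
  have h5: "coef10 a 5 = -\<rho> * q * s 5 + (q - \<rho> * p) * s 4 + (p - \<rho>) * s 3 + s 2"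
  proof -
    have "coeff (Ppoly a) (2 + 3) = -\<rho> * q * s 5 + (q - \<rho> * p) * s 4 + (p - \<rho>) * s 3 + 1 * s 2"
      unfolding PF coeff_cubic_mult3 s_def by simp
    then show ?thesis by (simp add: coeff_Ppoly)
  qed
  have h1: "coef10 a 1 = -\<rho> * q * s 1 + (q - \<rho> * p) * s 0"
    using coeff_cubic_mult1[of "-\<rho> * q" "q - \<rho> * p" "p - \<rho>" 1 "SP N"]
    unfolding PF[symmetric] s_def by (simp add: coeff_Ppoly)
  have a1: "coef10 a 1 > 0" and a5: "coef10 a 5 > 0" using T by auto
  have a9: "\<bar>coef10 a 9\<bar> \<le> e" using sm' by simp
  have e0: "e > 0" unfolding e_def by simp
  have s7p: "s 7 > 0" and s6p: "s 6 > 0" using spos by auto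
  have pe: "p = \<rho> - 1 - s 7" using h10 by simp
  have "(1 + s 7) * s 7 \<le> (1 + 8 * \<delta>) * (8 * \<delta>)"
    using s7 s7p d0 by (intro mult_mono) auto
  then have t1: "(1 + s 7) * s 7 \<le> 9 * \<delta>" unfolding \<delta>_def by simp
  have qb0: "q \<le> e + 9 * \<delta> + \<rho> * p"
  proof -
    have pr: "p - \<rho> = -(1 + s 7)" using h10 by simp
    have "(p - \<rho>) * s 7 = -((1 + s 7) * s 7)" unfolding pr by (simp add: algebra_simps)
    then have "q = coef10 a 9 - s 6 + (1 + s 7) * s 7 + \<rho> * p" using h9 by linarith
    then show ?thesis using a9 s6p t1 by linarith
  qed
  have qb: "q \<le> 10 * \<delta>"
  proof (cases "p \<le> 0")
    case True
    then have "\<rho> * p \<le> 0" using r0 by (simp add: mult_nonneg_nonpos)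
    then show ?thesis using qb0 e0 unfolding e_def \<delta>_def by simp
  next
    case False
    then have "\<rho> > 1" using pe s7p by simp
    then have "\<rho> - 1 \<le> 10 * e" by (rule rle)
    then have pb: "p \<le> 10 * e" and rb: "\<rho> \<le> 2" using pe s7p e100 by auto
    have "\<rho> * p \<le> 2 * (10 * e)" using pb rb False r0 by (intro mult_mono) auto
    then show ?thesis using qb0 unfolding e_def \<delta>_def by simp
  qed
  have q0: "q > 0" using disc by (smt (verit) zero_le_power2)
  have "\<bar>p\<bar>^2 < (1/100)^2" using disc qb unfolding \<delta>_def by (simp add: power2_eq_square)
  then have pa: "\<bar>p\<bar> < 1/100" by (rule power_less_imp_less_base) simp
  have rl: "\<rho> \<ge> 99/100" using pe s7p pa by linarith
  have ru: "\<rho> \<le> 101/100"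
  proof (cases "\<rho> > 1")
    case True then show ?thesis using rle e_def by simp
  qed simp
  define A where "A = q - \<rho> * p"
  define B where "B = \<rho> - p - 8 * \<delta>"
  have pl: "p < 1/100" "-p < 1/100" using pa by (auto simp: abs_less_iff)
  have B0: "B > 0" unfolding B_def \<delta>_def using rl pl by simp
  have s0p: "s 0 > 0" and s1p: "s 1 > 0" and s3p: "s 3 > 0" and s4p: "s 4 > 0" and s5p: "s 5 > 0"
    using spos by auto
  have rq: "\<rho> * q > 0" using r0 q0 by simp
  have i1: "\<rho> * q * s 1 < A * s 0" using h1 a1 unfolding A_def by (simp add: algebra_simps)
  have A0: "A > 0"
  proof -
    have "A * s 0 > 0" using i1 rq s1p by (smt (verit) mult_pos_pos)
    then show ?thesis using s0p by (simp add: zero_less_mult_iff)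
  qed
  have i5: "B * s 3 < A * s 4"
  proof -
    have "\<rho> * q * s 5 > 0" using rq s5p by simp
    have "8 * \<delta> * s 3 \<ge> s 2" using s2 .
    have "(\<rho> - p) * s 3 = s 2 + A * s 4 - \<rho> * q * s 5 - coef10 a 5" using h5 unfolding A_def
      by (simp add: algebra_simps)
    then have "(\<rho> - p) * s 3 < 8 * \<delta> * s 3 + A * s 4" using \<open>\<rho> * q * s 5 > 0\<close> a5 s2 by linarith
    then show ?thesis unfolding B_def by (simp add: algebra_simps)
  qed
  have m: "(\<rho> * q * s 1) * (B * s 3) < (A * s 0) * (A * s 4)"
    by (rule mult_strict_mono[OF i1 i5]) (use A0 s0p B0 s3p in auto)
  have "(\<rho> * q * B) * ((13/3) * s 0 * s 4) \<le> (\<rho> * q * B) * (s 1 * s 3)"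
    using D rq B0 by (intro mult_left_mono) auto
  also have "\<dots> = (\<rho> * q * s 1) * (B * s 3)" by (simp add: mult_ac)
  also have "\<dots> < (A * s 0) * (A * s 4)" by (rule m)
  finally have "(s 0 * s 4) * ((13/3) * \<rho> * q * B) < (s 0 * s 4) * A^2"
    by (simp add: mult_ac power2_eq_square)
  then have k1: "(13/3) * \<rho> * q * B < A^2" using s0p s4p by (subst (asm) mult_less_cancel_left_pos) auto
  have "\<rho>^2 * p^2 < \<rho>^2 * (4 * q)" using disc r0 by (intro mult_strict_left_mono) auto
  then have kA: "A^2 < q * (q - 2 * \<rho> * p + 4 * \<rho>^2)" unfolding A_def
    by (simp add: algebra_simps power2_eq_square)
  have "q * ((13/3) * \<rho> * B) = (13/3) * \<rho> * q * B" by (simp add: mult_ac)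
  then have "q * ((13/3) * \<rho> * B) < q * (q - 2 * \<rho> * p + 4 * \<rho>^2)" using k1 kA by linarith
  then have k2: "(13/3) * \<rho> * B < q - 2 * \<rho> * p + 4 * \<rho>^2"
    using q0 by (subst (asm) mult_less_cancel_left_pos) auto
  have "13 * (\<rho> * B) = 13 * \<rho>^2 - 13 * (\<rho> * p) - 104 * (\<delta> * \<rho>)"
    unfolding B_def by (simp add: algebra_simps power2_eq_square)
  moreover have "2 * \<rho> * p = 2 * (\<rho> * p)" by simp
  moreover have "(13/3) * \<rho> * B = (13/3) * (\<rho> * B)" by simp
  ultimately have k3: "(1/3) * \<rho>^2 < q + (7/3) * (\<rho> * p) + (104/3) * (\<delta> * \<rho>)"
    using k2 by linarith
  have "(99/100)^2 \<le> \<rho>^2" using rl by (intro power_mono) auto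
  then have b1: "9801/10000 \<le> \<rho>^2" by (simp add: power2_eq_square)
  have "\<bar>\<rho> * p\<bar> \<le> (101/100) * (1/100)" unfolding abs_mult
    using ru pa r0 by (intro mult_mono) auto
  then have b2: "\<rho> * p \<le> (101/100) * (1/100)" by simp
  have b3: "\<delta> * \<rho> \<le> \<delta> * (101/100)" using ru d0 by (intro mult_left_mono) auto
  have dval: "\<delta> = 1/1000000" unfolding \<delta>_def by simp
  show False using k3 b1 b2 b3 qb dval by linarith
qed



lemma closure_comp_le:
  fixes a :: "real^'n"
  assumes "a \<in> closure S" "\<forall>b\<in>S. b $ i \<le> c"
  shows "a $ i \<le> c"
proof (rule ccontr)
  assume "\<not> a $ i \<le> c"
  then have e: "a $ i - c > 0" by simp
  obtain b where b: "b \<in> S" "dist b a < a $ i - c" using assms(1) e unfolding closure_approachable by blast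
  have "\<bar>(b - a) $ i\<bar> \<le> norm (b - a)" by (rule component_le_norm_cart)
  then have "\<bar>b $ i - a $ i\<bar> < a $ i - c" using b(2) by (simp add: dist_norm)
  then have "b $ i > c" by linarith
  then show False using assms(2) b(1) by auto
qed

lemma closure_comp_ge:
  fixes a :: "real^'n"
  assumes "a \<in> closure S" "\<forall>b\<in>S. b $ i \<ge> c"
  shows "a $ i \<ge> c"
proof (rule ccontr)
  assume "\<not> a $ i \<ge> c"
  then have e: "c - a $ i > 0" by simp
  obtain b where b: "b \<in> S" "dist b a < c - a $ i" using assms(1) e unfolding closure_approachable by blast
  have "\<bar>(b - a) $ i\<bar> \<le> norm (b - a)" by (rule component_le_norm_cart)
  then have "\<bar>b $ i - a $ i\<bar> < c - a $ i" using b(2) by (simp add: dist_norm)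
  then have "b $ i < c" by linarith
  then show False using assms(2) b(1) by auto
qed

lemma zero_not_in_closure:
  assumes "a \<in> closure Tset" "\<forall>j<10. coef10 a j = 0"
  shows False
proof -
  have e: "(1::real)/10^61 > 0" by simp
  obtain b where b: "b \<in> Tset" "dist b a < 1/10^61"
    using assms(1) e unfolding closure_approachable by blast
  have "\<forall>j<10. \<bar>coef10 b j\<bar> \<le> 1/10^61"
  proof (intro allI impI)
    fix j :: nat assume j: "j < 10"
    have "\<bar>(b - a) $ (of_nat j :: 10)\<bar> \<le> norm (b - a)" by (rule component_le_norm_cart)
    then have "\<bar>coef10 b j - coef10 a j\<bar> \<le> dist b a" unfolding coef10_def by (simp add: dist_norm)
    then show "\<bar>coef10 b j\<bar> \<le> 1/10^61" using assms(2) j b(2) by simp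
  qed
  then show False using T_not_small[OF b(1)] by blast
qed

lemma mpr_mult: "map_poly (of_real::real\<Rightarrow>complex) (p * q) = map_poly of_real p * map_poly of_real q"
  by (rule poly_eqI) (simp add: coeff_map_poly coeff_mult)

lemma mpr_poly: "poly (map_poly (of_real::real\<Rightarrow>complex) p) (of_real x) = of_real (poly p x)"
  by (induction p) (auto simp: map_poly_pCons)

lemma two_root_decomp:
  fixes P :: "real poly"
  assumes dP: "degree P = 11" and lP: "lead_coeff P = 1" and ar: "all_roots_real P"
    and c2: "card {x. poly P x = 0} = 2"
  obtains r s m n where "r \<noteq> s" "m \<ge> 1" "n \<ge> 1" "m + n = 11" "P = [:-r,1:]^m * [:-s,1:]^n"
proof -
  have Pnz: "P \<noteq> 0" using dP by auto
  from c2[unfolded card_2_iff] obtain r s where rs: "{x. poly P x = 0} = {r, s}" "r \<noteq> s" by auto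
  have Pr: "poly P r = 0" and Ps: "poly P s = 0" using rs by auto
  define m where "m = order r P"
  define n where "n = order s P"
  have "order r P \<noteq> 0" using order_root[of P r] Pr Pnz by simp
  then have m1: "m \<ge> 1" unfolding m_def by simp
  have "order s P \<noteq> 0" using order_root[of P s] Ps Pnz by simp
  then have n1: "n \<ge> 1" unfolding n_def by simp
  obtain P1 where P1: "P = [:-r,1:]^m * P1" using order_1[of r P] m_def by (auto elim: dvdE)
  have P1nz: "P1 \<noteq> 0" using P1 Pnz by auto
  have Anz: "[:-r,1:]^m \<noteq> 0" by simp
  have "order s ([:-r,1:]^m) = 0" using rs by (intro order_0I) simp
  then have "order s P1 = n" using order_mult[of "[:-r,1:]^m" P1 s] P1 Pnz n_def by simp
  then obtain Q where Q: "P1 = [:-s,1:]^n * Q" using order_1[of s P1] by (auto elim: dvdE)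
  have Qnz: "Q \<noteq> 0" using Q P1nz by auto
  have PQ: "P = [:-r,1:]^m * ([:-s,1:]^n * Q)" using P1 Q by simp
  have ordP: "order y P = order y ([:-r,1:]^m) + order y ([:-s,1:]^n) + order y Q" for y
  proof -
    have "order y P = order y ([:-r,1:]^m) + order y ([:-s,1:]^n * Q)"
      unfolding PQ by (rule order_mult) (use PQ Pnz in simp)
    moreover have "order y ([:-s,1:]^n * Q) = order y ([:-s,1:]^n) + order y Q"
      by (rule order_mult) (simp add: Qnz)
    ultimately show ?thesis by simp
  qed
  have noreal: "poly Q y \<noteq> 0" for y
  proof
    assume Qy: "poly Q y = 0"
    then have "poly P y = 0" using PQ by simp
    then have "y = r \<or> y = s" using rs by auto
    moreover have "order y Q \<ge> 1" using order_root[of Q y] Qy Qnz by simp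
    moreover have "order r ([:-r,1:]^m) = m" by (rule order_power_n_n)
    moreover have "order s ([:-s,1:]^n) = n" by (rule order_power_n_n)
    moreover have "order s ([:-r,1:]^m) = 0" using rs by (intro order_0I) simp
    ultimately show False using ordP[of y] m_def n_def by auto
  qed
  have nocomplex: "poly (map_poly (of_real::real\<Rightarrow>complex) Q) z \<noteq> 0" for z
  proof
    assume Qz: "poly (map_poly (of_real::real\<Rightarrow>complex) Q) z = 0"
    have "poly (map_poly (of_real::real\<Rightarrow>complex) P) z = 0" unfolding PQ mpr_mult using Qz by simp
    then have "z \<in> \<real>" using ar unfolding all_roots_real_def by blast
    then obtain y where y: "z = of_real y" by (auto elim: Reals_cases)
    have "of_real (poly Q y) = (0::complex)" using Qz unfolding y mpr_poly .
    then show False using noreal by simp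
  qed
  have "constant (poly (map_poly (of_real::real\<Rightarrow>complex) Q))"
    using fundamental_theorem_of_algebra nocomplex by blast
  then have "degree (map_poly (of_real::real\<Rightarrow>complex) Q) = 0" by (simp add: constant_degree)
  then have dQ: "degree Q = 0" by (subst (asm) degree_map_poly) auto
  have "degree P = m + (n + degree Q)" unfolding PQ
    by (simp add: degree_mult_eq Qnz degree_linear_power)
  then have mn: "m + n = 11" using dP dQ by simp
  have "lead_coeff P = lead_coeff Q" unfolding PQ by (simp add: lead_coeff_mult lead_coeff_power)
  then have "coeff Q 0 = 1" using lP dQ by simp
  then have "Q = 1" using degree_0_id[OF dQ] by (simp add: one_pCons)
  then have "P = [:-r,1:]^m * [:-s,1:]^n" using PQ by simp
  then show ?thesis using that rs(2) m1 n1 mn by blast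
qed



lemma lp1: "coeff ([:a, 1:] ^ m) 1 = of_nat m * a ^ (m - 1)" for a :: real
proof (induction m)
  case 0 then show ?case by simp
next
  case (Suc m)
  have "[:a, 1:] ^ Suc m = [:a, 1:] * [:a, 1:] ^ m" by simp
  also have "coeff \<dots> 1 = a * coeff ([:a, 1:] ^ m) 1 + coeff ([:a, 1:] ^ m) 0"
    by (simp add: mult_pCons_left)
  finally show ?case using Suc by (cases m) (simp_all add: coeff_0_power algebra_simps)
qed

lemma lp1s: "coeff ([:a, 1:] ^ m) (Suc 0) = of_nat m * a ^ (m - 1)" for a :: real
  using lp1[of a m] by simp

lemma c1_formula: "coeff ([:a, 1:] ^ m * [:b, 1:] ^ n) 1 = a^m * (of_nat n * b^(n - 1)) + of_nat m * a^(m - 1) * b^n"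
  for a b :: real
  by (simp add: coeff_mult lp1s coeff_0_power)

lemma c0_formula: "coeff ([:a, 1:] ^ m * [:b, 1:] ^ n) 0 = a^m * b^n" for a b :: real
  by (simp add: coeff_mult_0 coeff_0_power)

lemma x_pow_zero: "j < k \<Longrightarrow> coeff ([:0, 1:] ^ k * q) j = 0" for q :: "real poly"
proof (induction k arbitrary: j)
  case 0 then show ?case by simp
next
  case (Suc k)
  have "[:0, 1:] ^ Suc k * q = pCons 0 ([:0, 1:] ^ k * q)" by (simp add: mult_pCons_left mult.assoc)
  then show ?case using Suc by (cases j) simp_all
qed

lemma mixlow:
  fixes \<rho> \<sigma> :: real and k n :: nat
  assumes "k + n = 11" "odd k" "k \<le> 5" "\<rho> > 0" "\<sigma> > 0" "real k * \<rho> - real n * \<sigma> = 1"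
    "(-\<rho>)^k * (real n * \<sigma>^(n - 1)) + real k * (-\<rho>)^(k - 1) * \<sigma>^n \<ge> 0"
  shows False
proof -
  obtain j where j: "k = Suc (2 * j)" using assms(2) by (auto elim!: oddE)
  have "n \<ge> 6" using assms(1,3) by simp
  then obtain i where i: "n = Suc i" by (cases n) auto
  have e1: "(-\<rho>)^k = - (\<rho>^(2*j) * \<rho>)" using j by (simp add: power_mult_distrib)
  have e2: "(-\<rho>)^(k - 1) = \<rho>^(2*j)" using j by (simp add: power_mult)
  have e3: "\<sigma>^n = \<sigma>^i * \<sigma>" using i by simp
  have "\<rho>^(2*j) * \<sigma>^i * (real k * \<sigma> - real n * \<rho>) \<ge> 0"
    using assms(7) unfolding e1 e2 e3 i by (simp add: algebra_simps)
  moreover have "\<rho>^(2*j) * \<sigma>^i > 0" using assms by simp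
  ultimately have A: "real k * \<sigma> \<ge> real n * \<rho>" by (simp add: zero_le_mult_iff)
  have kn: "real k \<le> 5" "real n \<ge> 6" using assms(1,3) by auto
  have "real k * \<sigma> \<le> 5 * \<sigma>" using kn assms(5) by (intro mult_right_mono) auto
  moreover have "real n * \<rho> \<ge> 6 * \<rho>" using kn assms(4) by (intro mult_right_mono) auto
  moreover have "real k * \<rho> \<le> 5 * \<rho>" using kn assms(4) by (intro mult_right_mono) auto
  moreover have "real n * \<sigma> \<ge> 6 * \<sigma>" using kn assms(5) by (intro mult_right_mono) auto
  ultimately show False using A assms(4,5,6) by linarith
qed

lemma lin_helper: "X < 0 \<Longrightarrow> Y \<le> 0 \<Longrightarrow> 0 \<le> E \<Longrightarrow> (200::real) * E = X + Y \<Longrightarrow> False"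
  by linarith

lemma k9:
  fixes r s :: real
  assumes "r < 0" "s > 0" "2 * r + 9 * s = 1" "r^2 + 18 * (r * s) + 36 * s^2 \<le> 0"
    "9 * (r^2 * s) + 72 * (r * s^2) + 84 * s^3 \<ge> 0"
  shows False
proof -
  have "r + 2 * s \<le> 0"
  proof (rule ccontr)
    assume "\<not> r + 2 * s \<le> 0"
    then have "18 * s * (2 * s + r) > 0" using assms(2) by simp
    moreover have "r^2 + 18 * (r * s) + 36 * s^2 = r^2 + 18 * s * (2 * s + r)" by (simp add: algebra_simps power2_eq_square)
    ultimately show False using assms(4) by (smt (verit) zero_le_power2)
  qed
  moreover have "r + 6 * s > 0" using assms by linarith
  ultimately have "(r + 2 * s) * (r + 6 * s) \<le> 0" by (simp add: mult_nonpos_nonneg)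
  moreover have "s^2 > 0" using assms(2) by simp
  ultimately have "9 * ((r + 2 * s) * (r + 6 * s)) - 24 * s^2 < 0" by linarith
  then have "s * (9 * ((r + 2 * s) * (r + 6 * s)) - 24 * s^2) < 0" using assms(2) by (simp add: mult_pos_neg)
  moreover have "s * (9 * ((r + 2 * s) * (r + 6 * s)) - 24 * s^2) = 9 * (r^2 * s) + 72 * (r * s^2) + 84 * s^3"
    by (simp add: algebra_simps power2_eq_square power3_eq_cube)
  ultimately show False using assms(5) by simp
qed

lemma k7:
  fixes r s :: real
  assumes "r < 0" "s > 0" "4 * r + 7 * s = 1" "6 * r^2 + 28 * (r * s) + 21 * s^2 \<le> 0"
    "4 * r^3 + 42 * (r^2 * s) + 84 * (r * s^2) + 35 * s^3 \<ge> 0"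
  shows False
proof -
  have lo: "r + 9/10 * s \<le> 0"
  proof (rule ccontr)
    assume "\<not> r + 9/10 * s \<le> 0"
    then have "1614/100 * s + 172/10 * r > 0" using assms(2) by simp
    then have "s * (1614/100 * s + 172/10 * r) > 0" using assms(2) by simp
    moreover have "6 * r^2 + 28 * (r * s) + 21 * s^2 = 6 * (r + 9/10 * s)^2 + s * (1614/100 * s + 172/10 * r)"
      by (simp add: algebra_simps power2_eq_square)
    ultimately show False using assms(4) by (smt (verit) zero_le_power2)
  qed
  have hi: "4 * r + 7 * s > 0" using assms by linarith
  have lo': "10 * r + 9 * s \<le> 0" using lo by linarith
  have "(10 * r + 9 * s) * (4 * r + 7 * s) \<le> 0" using lo' hi by (simp add: mult_nonpos_nonneg)
  moreover have "20 * r + 157 * s > 0" using hi assms(2) by linarith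
  ultimately have P: "(10 * r + 9 * s) * (4 * r + 7 * s) * (20 * r + 157 * s) \<le> 0" by (simp add: mult_nonpos_nonneg)
  have L: "-1102 * r - 2891 * s < 0" using hi assms(2) by linarith
  have X: "s^2 * (-1102 * r - 2891 * s) < 0" using L assms(2) by (simp add: mult_pos_neg)
  have Id: "200 * (4 * r^3 + 42 * (r^2 * s) + 84 * (r * s^2) + 35 * s^3)
     = s^2 * (-1102 * r - 2891 * s) + (10 * r + 9 * s) * (4 * r + 7 * s) * (20 * r + 157 * s)"
    by algebra
  show False by (rule lin_helper[OF X P assms(5) Id])
qed



lemma case_m1:
  fixes r s :: real
  assumes C: "C = [:-r,1:]^1 * [:-s,1:]^10" and rs: "r \<noteq> s"
    and c10: "coeff C 10 = -1" and c9: "coeff C 9 \<le> 0" and c8: "coeff C 8 \<le> 0"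
    and c1: "coeff C 1 \<ge> 0" and c0: "coeff C 0 \<le> 0"
  shows "\<forall>j<10. coeff C j = 0"
proof -
  have e10: "coeff C 10 = -(1 * r + 10 * s)" unfolding C by (simp add: eval_nat_numeral algebra_simps)
  have e9: "coeff C 9 = 10 * (r * s) + 45 * s^2" unfolding C by (simp add: eval_nat_numeral algebra_simps)
  have e1: "coeff C 1 = (-r)^1 * (real 10 * (-s)^(10 - 1)) + real 1 * (-r)^(1 - 1) * (-s)^10"
    unfolding C using c1_formula[of "-r" 1 "-s" 10] by simp
  have e0: "coeff C 0 = (-r)^1 * (-s)^10" unfolding C using c0_formula[of "-r" 1 "-s" 10] by simp
  have f10: "1 * r + 10 * s = 1" using c10 e10 by simp
  have f9: "10 * (r * s) + 45 * s^2 \<le> 0" using c9 e9 by simp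
  have f1: "(-r)^1 * (real 10 * (-s)^(10 - 1)) + real 1 * (-r)^(1 - 1) * (-s)^10 \<ge> 0" using c1 e1 by simp
  have f0: "(-r)^1 * (-s)^10 \<le> 0" using c0 e0 by simp
  show ?thesis
  proof (cases "r = 0")
    case True
    then have "45 * s^2 \<le> 0" using f9 by simp
    then have "s = 0" by (simp add: mult_le_0_iff)
    then show ?thesis using f10 True by simp
  next
    case rnz: False
    show ?thesis
    proof (cases "s = 0")
      case True
      then have "r = 1" using f10 by simp
      then have Ce: "C = [:0,1:]^10 * [:-1,1:]" unfolding C using True by (simp add: mult.commute)
      show ?thesis unfolding Ce by (intro allI impI x_pow_zero)
    next
      case snz: False
      have "r > 0 \<and> s > 0 \<or> r < 0 \<and> s < 0 \<or> r > 0 \<and> s < 0 \<or> r < 0 \<and> s > 0"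
        using rnz snz by linarith
      then show ?thesis
      proof (elim disjE conjE)
        assume "r > 0" "s > 0"
        then have "r * s > 0" "r^2 \<ge> 0" "s^2 \<ge> 0" by simp_all
        then show ?thesis using f9 by linarith
      next
        assume "r < 0" "s < 0"
        then show ?thesis using f10 by linarith
      next
        assume rp: "r > 0" and sn: "s < 0"
        have "False" by (rule mixlow[of 1 10 r "-s"]) (use rp sn f10 f1 in simp_all)
        then show ?thesis ..
      next
        assume rn: "r < 0" and sp: "s > 0"
        have "(-r)^1 > 0" using rn by simp
        moreover have "(-s)^10 > 0" using sp by (simp add: zero_less_power_eq)
        ultimately show ?thesis using f0 by (smt (verit) mult_pos_pos)
      qed
    qed
  qed
qed

lemma case_m2:
  fixes r s :: real
  assumes C: "C = [:-r,1:]^2 * [:-s,1:]^9" and rs: "r \<noteq> s"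
    and c10: "coeff C 10 = -1" and c9: "coeff C 9 \<le> 0" and c8: "coeff C 8 \<le> 0"
    and c1: "coeff C 1 \<ge> 0" and c0: "coeff C 0 \<le> 0"
  shows "\<forall>j<10. coeff C j = 0"
proof -
  have e10: "coeff C 10 = -(2 * r + 9 * s)" unfolding C by (simp add: eval_nat_numeral algebra_simps)
  have e9: "coeff C 9 = r^2 + 18 * (r * s) + 36 * s^2" unfolding C by (simp add: eval_nat_numeral algebra_simps)
  have e8: "coeff C 8 = -(9 * (r^2 * s) + 72 * (r * s^2) + 84 * s^3)" unfolding C by (simp add: eval_nat_numeral algebra_simps)
  have f8: "9 * (r^2 * s) + 72 * (r * s^2) + 84 * s^3 \<ge> 0" using c8 e8 by simp
  have e1: "coeff C 1 = (-r)^2 * (real 9 * (-s)^(9 - 1)) + real 2 * (-r)^(2 - 1) * (-s)^9"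
    unfolding C using c1_formula[of "-r" 2 "-s" 9] by simp
  have e0: "coeff C 0 = (-r)^2 * (-s)^9" unfolding C using c0_formula[of "-r" 2 "-s" 9] by simp
  have f10: "2 * r + 9 * s = 1" using c10 e10 by simp
  have f9: "r^2 + 18 * (r * s) + 36 * s^2 \<le> 0" using c9 e9 by simp
  have f1: "(-r)^2 * (real 9 * (-s)^(9 - 1)) + real 2 * (-r)^(2 - 1) * (-s)^9 \<ge> 0" using c1 e1 by simp
  have f0: "(-r)^2 * (-s)^9 \<le> 0" using c0 e0 by simp
  show ?thesis
  proof (cases "r = 0")
    case True
    then have "36 * s^2 \<le> 0" using f9 by simp
    then have "s = 0" by (simp add: mult_le_0_iff)
    then show ?thesis using f10 True by simp
  next
    case rnz: False
    show ?thesis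
    proof (cases "s = 0")
      case True
      then have "1 * r^2 \<le> 0" using f9 by simp
      then have "r = 0" by (simp add: mult_le_0_iff)
      then show ?thesis using rnz by simp
    next
      case snz: False
      have "r > 0 \<and> s > 0 \<or> r < 0 \<and> s < 0 \<or> r > 0 \<and> s < 0 \<or> r < 0 \<and> s > 0"
        using rnz snz by linarith
      then show ?thesis
      proof (elim disjE conjE)
        assume "r > 0" "s > 0"
        then have "r * s > 0" "r^2 \<ge> 0" "s^2 \<ge> 0" by simp_all
        then show ?thesis using f9 by linarith
      next
        assume "r < 0" "s < 0"
        then show ?thesis using f10 by linarith
      next
        assume rp: "r > 0" and sn: "s < 0"
        have "(-r)^2 > 0" using rp by (simp add: zero_less_power_eq)
        moreover have "(-s)^9 > 0" using sn by simp
        ultimately show ?thesis using f0 by (smt (verit) mult_pos_pos)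
      next
        assume rn: "r < 0" and sp: "s > 0"
        have "False" by (rule k9[OF rn sp f10 f9 f8])
        then show ?thesis ..
      qed
    qed
  qed
qed

lemma case_m3:
  fixes r s :: real
  assumes C: "C = [:-r,1:]^3 * [:-s,1:]^8" and rs: "r \<noteq> s"
    and c10: "coeff C 10 = -1" and c9: "coeff C 9 \<le> 0" and c8: "coeff C 8 \<le> 0"
    and c1: "coeff C 1 \<ge> 0" and c0: "coeff C 0 \<le> 0"
  shows "\<forall>j<10. coeff C j = 0"
proof -
  have e10: "coeff C 10 = -(3 * r + 8 * s)" unfolding C by (simp add: eval_nat_numeral algebra_simps)
  have e9: "coeff C 9 = 3 * r^2 + 24 * (r * s) + 28 * s^2" unfolding C by (simp add: eval_nat_numeral algebra_simps)
  have e1: "coeff C 1 = (-r)^3 * (real 8 * (-s)^(8 - 1)) + real 3 * (-r)^(3 - 1) * (-s)^8"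
    unfolding C using c1_formula[of "-r" 3 "-s" 8] by simp
  have e0: "coeff C 0 = (-r)^3 * (-s)^8" unfolding C using c0_formula[of "-r" 3 "-s" 8] by simp
  have f10: "3 * r + 8 * s = 1" using c10 e10 by simp
  have f9: "3 * r^2 + 24 * (r * s) + 28 * s^2 \<le> 0" using c9 e9 by simp
  have f1: "(-r)^3 * (real 8 * (-s)^(8 - 1)) + real 3 * (-r)^(3 - 1) * (-s)^8 \<ge> 0" using c1 e1 by simp
  have f0: "(-r)^3 * (-s)^8 \<le> 0" using c0 e0 by simp
  show ?thesis
  proof (cases "r = 0")
    case True
    then have "28 * s^2 \<le> 0" using f9 by simp
    then have "s = 0" by (simp add: mult_le_0_iff)
    then show ?thesis using f10 True by simp
  next
    case rnz: False
    show ?thesis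
    proof (cases "s = 0")
      case True
      then have "3 * r^2 \<le> 0" using f9 by simp
      then have "r = 0" by (simp add: mult_le_0_iff)
      then show ?thesis using rnz by simp
    next
      case snz: False
      have "r > 0 \<and> s > 0 \<or> r < 0 \<and> s < 0 \<or> r > 0 \<and> s < 0 \<or> r < 0 \<and> s > 0"
        using rnz snz by linarith
      then show ?thesis
      proof (elim disjE conjE)
        assume "r > 0" "s > 0"
        then have "r * s > 0" "r^2 \<ge> 0" "s^2 \<ge> 0" by simp_all
        then show ?thesis using f9 by linarith
      next
        assume "r < 0" "s < 0"
        then show ?thesis using f10 by linarith
      next
        assume rp: "r > 0" and sn: "s < 0"
        have "False" by (rule mixlow[of 3 8 r "-s"]) (use rp sn f10 f1 in simp_all)
        then show ?thesis ..
      next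
        assume rn: "r < 0" and sp: "s > 0"
        have "(-r)^3 > 0" using rn by simp
        moreover have "(-s)^8 > 0" using sp by (simp add: zero_less_power_eq)
        ultimately show ?thesis using f0 by (smt (verit) mult_pos_pos)
      qed
    qed
  qed
qed

lemma case_m4:
  fixes r s :: real
  assumes C: "C = [:-r,1:]^4 * [:-s,1:]^7" and rs: "r \<noteq> s"
    and c10: "coeff C 10 = -1" and c9: "coeff C 9 \<le> 0" and c8: "coeff C 8 \<le> 0"
    and c1: "coeff C 1 \<ge> 0" and c0: "coeff C 0 \<le> 0"
  shows "\<forall>j<10. coeff C j = 0"
proof -
  have e10: "coeff C 10 = -(4 * r + 7 * s)" unfolding C by (simp add: eval_nat_numeral algebra_simps)
  have e9: "coeff C 9 = 6 * r^2 + 28 * (r * s) + 21 * s^2" unfolding C by (simp add: eval_nat_numeral algebra_simps)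
  have e8: "coeff C 8 = -(4 * r^3 + 42 * (r^2 * s) + 84 * (r * s^2) + 35 * s^3)" unfolding C by (simp add: eval_nat_numeral algebra_simps)
  have f8: "4 * r^3 + 42 * (r^2 * s) + 84 * (r * s^2) + 35 * s^3 \<ge> 0" using c8 e8 by simp
  have e1: "coeff C 1 = (-r)^4 * (real 7 * (-s)^(7 - 1)) + real 4 * (-r)^(4 - 1) * (-s)^7"
    unfolding C using c1_formula[of "-r" 4 "-s" 7] by simp
  have e0: "coeff C 0 = (-r)^4 * (-s)^7" unfolding C using c0_formula[of "-r" 4 "-s" 7] by simp
  have f10: "4 * r + 7 * s = 1" using c10 e10 by simp
  have f9: "6 * r^2 + 28 * (r * s) + 21 * s^2 \<le> 0" using c9 e9 by simp
  have f1: "(-r)^4 * (real 7 * (-s)^(7 - 1)) + real 4 * (-r)^(4 - 1) * (-s)^7 \<ge> 0" using c1 e1 by simp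
  have f0: "(-r)^4 * (-s)^7 \<le> 0" using c0 e0 by simp
  show ?thesis
  proof (cases "r = 0")
    case True
    then have "21 * s^2 \<le> 0" using f9 by simp
    then have "s = 0" by (simp add: mult_le_0_iff)
    then show ?thesis using f10 True by simp
  next
    case rnz: False
    show ?thesis
    proof (cases "s = 0")
      case True
      then have "6 * r^2 \<le> 0" using f9 by simp
      then have "r = 0" by (simp add: mult_le_0_iff)
      then show ?thesis using rnz by simp
    next
      case snz: False
      have "r > 0 \<and> s > 0 \<or> r < 0 \<and> s < 0 \<or> r > 0 \<and> s < 0 \<or> r < 0 \<and> s > 0"
        using rnz snz by linarith
      then show ?thesis
      proof (elim disjE conjE)
        assume "r > 0" "s > 0"
        then have "r * s > 0" "r^2 \<ge> 0" "s^2 \<ge> 0" by simp_all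
        then show ?thesis using f9 by linarith
      next
        assume "r < 0" "s < 0"
        then show ?thesis using f10 by linarith
      next
        assume rp: "r > 0" and sn: "s < 0"
        have "(-r)^4 > 0" using rp by (simp add: zero_less_power_eq)
        moreover have "(-s)^7 > 0" using sn by simp
        ultimately show ?thesis using f0 by (smt (verit) mult_pos_pos)
      next
        assume rn: "r < 0" and sp: "s > 0"
        have "False" by (rule k7[OF rn sp f10 f9 f8])
        then show ?thesis ..
      qed
    qed
  qed
qed

lemma case_m5:
  fixes r s :: real
  assumes C: "C = [:-r,1:]^5 * [:-s,1:]^6" and rs: "r \<noteq> s"
    and c10: "coeff C 10 = -1" and c9: "coeff C 9 \<le> 0" and c8: "coeff C 8 \<le> 0"
    and c1: "coeff C 1 \<ge> 0" and c0: "coeff C 0 \<le> 0"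
  shows "\<forall>j<10. coeff C j = 0"
proof -
  have e10: "coeff C 10 = -(5 * r + 6 * s)" unfolding C by (simp add: eval_nat_numeral algebra_simps)
  have e9: "coeff C 9 = 10 * r^2 + 30 * (r * s) + 15 * s^2" unfolding C by (simp add: eval_nat_numeral algebra_simps)
  have e1: "coeff C 1 = (-r)^5 * (real 6 * (-s)^(6 - 1)) + real 5 * (-r)^(5 - 1) * (-s)^6"
    unfolding C using c1_formula[of "-r" 5 "-s" 6] by simp
  have e0: "coeff C 0 = (-r)^5 * (-s)^6" unfolding C using c0_formula[of "-r" 5 "-s" 6] by simp
  have f10: "5 * r + 6 * s = 1" using c10 e10 by simp
  have f9: "10 * r^2 + 30 * (r * s) + 15 * s^2 \<le> 0" using c9 e9 by simp
  have f1: "(-r)^5 * (real 6 * (-s)^(6 - 1)) + real 5 * (-r)^(5 - 1) * (-s)^6 \<ge> 0" using c1 e1 by simp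
  have f0: "(-r)^5 * (-s)^6 \<le> 0" using c0 e0 by simp
  show ?thesis
  proof (cases "r = 0")
    case True
    then have "15 * s^2 \<le> 0" using f9 by simp
    then have "s = 0" by (simp add: mult_le_0_iff)
    then show ?thesis using f10 True by simp
  next
    case rnz: False
    show ?thesis
    proof (cases "s = 0")
      case True
      then have "10 * r^2 \<le> 0" using f9 by simp
      then have "r = 0" by (simp add: mult_le_0_iff)
      then show ?thesis using rnz by simp
    next
      case snz: False
      have "r > 0 \<and> s > 0 \<or> r < 0 \<and> s < 0 \<or> r > 0 \<and> s < 0 \<or> r < 0 \<and> s > 0"
        using rnz snz by linarith
      then show ?thesis
      proof (elim disjE conjE)
        assume "r > 0" "s > 0"
        then have "r * s > 0" "r^2 \<ge> 0" "s^2 \<ge> 0" by simp_all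
        then show ?thesis using f9 by linarith
      next
        assume "r < 0" "s < 0"
        then show ?thesis using f10 by linarith
      next
        assume rp: "r > 0" and sn: "s < 0"
        have "False" by (rule mixlow[of 5 6 r "-s"]) (use rp sn f10 f1 in simp_all)
        then show ?thesis ..
      next
        assume rn: "r < 0" and sp: "s > 0"
        have "(-r)^5 > 0" using rn by simp
        moreover have "(-s)^6 > 0" using sp by (simp add: zero_less_power_eq)
        ultimately show ?thesis using f0 by (smt (verit) mult_pos_pos)
      qed
    qed
  qed
qed


lemma two_root_all:
  fixes r s :: real
  assumes mn: "m + n = 11" "m \<ge> 1" "n \<ge> 1" and rs: "r \<noteq> s" and C: "C = [:-r,1:]^m * [:-s,1:]^n"
    and c10: "coeff C 10 = -1" and c9: "coeff C 9 \<le> 0" and c8: "coeff C 8 \<le> 0"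
    and c1: "coeff C 1 \<ge> 0" and c0: "coeff C 0 \<le> 0"
  shows "\<forall>j<10. coeff C j = 0"
proof -
  have C': "C = [:-s,1:]^n * [:-r,1:]^m" using C by (simp add: mult.commute)
  have sr: "s \<noteq> r" using rs by simp
  have "m = 1 \<or> m = 2 \<or> m = 3 \<or> m = 4 \<or> m = 5 \<or> m = 6 \<or> m = 7 \<or> m = 8 \<or> m = 9 \<or> m = 10"
    using mn by presburger
  then show ?thesis
  proof (elim disjE)
    assume "m = 1"
    then have "n = 10" using mn by simp
    then have E: "C = [:-r,1:]^1 * [:-s,1:]^10" using C \<open>m = 1\<close> by simp
    show ?thesis by (rule case_m1[OF E rs c10 c9 c8 c1 c0])
  next
    assume "m = 2"
    then have "n = 9" using mn by simp
    then have E: "C = [:-r,1:]^2 * [:-s,1:]^9" using C \<open>m = 2\<close> by simp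
    show ?thesis by (rule case_m2[OF E rs c10 c9 c8 c1 c0])
  next
    assume "m = 3"
    then have "n = 8" using mn by simp
    then have E: "C = [:-r,1:]^3 * [:-s,1:]^8" using C \<open>m = 3\<close> by simp
    show ?thesis by (rule case_m3[OF E rs c10 c9 c8 c1 c0])
  next
    assume "m = 4"
    then have "n = 7" using mn by simp
    then have E: "C = [:-r,1:]^4 * [:-s,1:]^7" using C \<open>m = 4\<close> by simp
    show ?thesis by (rule case_m4[OF E rs c10 c9 c8 c1 c0])
  next
    assume "m = 5"
    then have "n = 6" using mn by simp
    then have E: "C = [:-r,1:]^5 * [:-s,1:]^6" using C \<open>m = 5\<close> by simp
    show ?thesis by (rule case_m5[OF E rs c10 c9 c8 c1 c0])
  next
    assume "m = 6"
    then have "n = 5" using mn by simp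
    then have E: "C = [:-s,1:]^5 * [:-r,1:]^6" using C' \<open>m = 6\<close> by simp
    show ?thesis by (rule case_m5[OF E sr c10 c9 c8 c1 c0])
  next
    assume "m = 7"
    then have "n = 4" using mn by simp
    then have E: "C = [:-s,1:]^4 * [:-r,1:]^7" using C' \<open>m = 7\<close> by simp
    show ?thesis by (rule case_m4[OF E sr c10 c9 c8 c1 c0])
  next
    assume "m = 8"
    then have "n = 3" using mn by simp
    then have E: "C = [:-s,1:]^3 * [:-r,1:]^8" using C' \<open>m = 8\<close> by simp
    show ?thesis by (rule case_m3[OF E sr c10 c9 c8 c1 c0])
  next
    assume "m = 9"
    then have "n = 2" using mn by simp
    then have E: "C = [:-s,1:]^2 * [:-r,1:]^9" using C' \<open>m = 9\<close> by simp
    show ?thesis by (rule case_m2[OF E sr c10 c9 c8 c1 c0])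
  next
    assume "m = 10"
    then have "n = 1" using mn by simp
    then have E: "C = [:-s,1:]^1 * [:-r,1:]^10" using C' \<open>m = 10\<close> by simp
    show ?thesis by (rule case_m1[OF E sr c10 c9 c8 c1 c0])
  qed
qed

theorem lemma9:
  fixes \<Gamma> :: "(real^10) set"
  assumes "Tset \<noteq> {}"
    and "\<Gamma> \<in> components Tset"
  shows "\<forall>p \<in> {Ppoly a | a. a \<in> closure \<Gamma> \<and> all_roots_real (Ppoly a)}.
           card {x::real. poly p x = 0} \<noteq> 2"
proof
  fix p assume "p \<in> {Ppoly a | a. a \<in> closure \<Gamma> \<and> all_roots_real (Ppoly a)}"
  then obtain a where p: "p = Ppoly a" and aG: "a \<in> closure \<Gamma>" and ar: "all_roots_real (Ppoly a)" by blast
  show "card {x::real. poly p x = 0} \<noteq> 2"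
  proof
    assume c2: "card {x::real. poly p x = 0} = 2"
    have GT: "\<Gamma> \<subseteq> Tset" using assms(2) by (rule in_components_subset)
    have aT: "a \<in> closure Tset" using aG closure_mono[OF GT] by blast
    have neg: "coef10 a j \<le> 0" if "j \<in> {6..9}" for j
      unfolding coef10_def
    proof (rule closure_comp_le[OF aT])
      show "\<forall>b\<in>Tset. b $ (of_nat j :: 10) \<le> 0"
      proof
        fix b assume "b \<in> Tset"
        then have "coef10 b j < 0" using that unfolding Tset_def by auto
        then show "b $ (of_nat j :: 10) \<le> 0" unfolding coef10_def by simp
      qed
    qed
    have pos: "coef10 a j \<ge> 0" if "j \<in> {1..5}" for j
      unfolding coef10_def
    proof (rule closure_comp_ge[OF aT])
      show "\<forall>b\<in>Tset. b $ (of_nat j :: 10) \<ge> 0"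
      proof
        fix b assume "b \<in> Tset"
        then have "coef10 b j > 0" using that unfolding Tset_def by auto
        then show "b $ (of_nat j :: 10) \<ge> 0" unfolding coef10_def by simp
      qed
    qed
    have neg0: "coef10 a 0 \<le> 0"
      unfolding coef10_def
    proof (rule closure_comp_le[OF aT])
      show "\<forall>b\<in>Tset. b $ (of_nat 0 :: 10) \<le> 0"
      proof
        fix b assume "b \<in> Tset"
        then have "coef10 b 0 < 0" unfolding Tset_def by auto
        then show "b $ (of_nat 0 :: 10) \<le> 0" unfolding coef10_def by simp
      qed
    qed
    obtain r s m n where rs: "r \<noteq> s" "m \<ge> 1" "n \<ge> 1" "m + n = 11"
      and Pe: "Ppoly a = [:-r,1:]^m * [:-s,1:]^n"
      using two_root_decomp[OF degree_Ppoly lead_Ppoly ar c2[unfolded p]] by blast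
    have "\<forall>j<10. coeff (Ppoly a) j = 0"
    proof (rule two_root_all[OF rs(4) rs(2) rs(3) rs(1) Pe])
      show "coeff (Ppoly a) 10 = -1" by (simp add: coeff_Ppoly)
      show "coeff (Ppoly a) 9 \<le> 0" using neg[of 9] by (simp add: coeff_Ppoly)
      show "coeff (Ppoly a) 8 \<le> 0" using neg[of 8] by (simp add: coeff_Ppoly)
      show "coeff (Ppoly a) 1 \<ge> 0" using pos[of 1] by (simp add: coeff_Ppoly)
      show "coeff (Ppoly a) 0 \<le> 0" using neg0 by (simp add: coeff_Ppoly)
    qed
    then have "\<forall>j<10. coef10 a j = 0" by (simp add: coeff_Ppoly)
    then show False using zero_not_in_closure[OF aT] by blast
  qed
qed

end
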